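(* Let $k\ge 2$, $n=2^k$, and run Jakobsson's pebble-update procedure for $n/2$ steps. Then the only pebble discarded during these $n/2$ steps is the pebble with initial label $k-1$ (initially at position $n/2$); in particular the pebble with initial label $k$ (at the seed position $n$) and all pebbles with initial labels $j\le k-2$ are not discarded.
   Context: Jakobsson's pebble-update procedure (hash-chain preimage traversal). Fix $k\ge 1$ and $n=2^k$. There are $k$ pebbles, identified by their initial label $j\in\{1,\dots,k\}$. Pebble $j$ has two fixed constants $S_j=3\cdot 2^j$ (start increment) and $D_j=2^{j+1}$ (destination increment), and two integer fields $\mathrm{Position}$ and $\mathrm{Destination}$ (which may be set to $+\infty$). Initially $\mathrm{Position}=\mathrm{Destination}=2^j$ for pebble $j$, and a counter $c$ equals $0$. The pebbles are kept sorted by $\mathrm{Position}$, and "the first pebble" means the pebble with the smallest $\mathrm{Position}$. One step: (i) if $c=n$, stop; otherwise $c\leftarrow c+1$; (ii) for every pebble with $\mathrm{Position}\ne\mathrm{Destination}$, set $\mathrm{Position}\leftarrow\mathrm{Position}-2$; (iii) if $c$ is even, the first pebble (say with initial label $j$) makes a backward move: $\mathrm{Position}\leftarrow \mathrm{Position}+S_j$, $\mathrm{Destination}\leftarrow\mathrm{Destination}+D_j$; if the new Destination exceeds $n$, both fields are set to $+\infty$ and the pebble is said to be discarded; then the pebbles are re-sorted by $\mathrm{Position}$. (Each pebble also stores a hash-chain value, which does not influence the evolution of the Position and Destination fields.) *)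

theory Defs
  imports Main
begin

text \<open>Pebbles are identified by their initial
label j in {1..k}. Position and Destination are of type int option, where None
stands for +infinity. A state is (c, pos, dest).\<close>

type_synonym pstate = "nat \<times> (nat \<Rightarrow> int option) \<times> (nat \<Rightarrow> int option)"

definition S_inc :: "nat \<Rightarrow> int" where "S_inc j = 3 * 2 ^ j"
definition D_inc :: "nat \<Rightarrow> int" where "D_inc j = 2 ^ (j + 1)"

definition pos_le :: "int option \<Rightarrow> int option \<Rightarrow> bool" where
  "pos_le x y = (case y of None \<Rightarrow> True
                  | Some b \<Rightarrow> (case x of None \<Rightarrow> False | Some a \<Rightarrow> a \<le> b))"

definition first_pebble :: "nat \<Rightarrow> (nat \<Rightarrow> int option) \<Rightarrow> nat" where
  "first_pebble k pos = (LEAST j. j \<in> {1..k} \<and> (\<forall>i\<in>{1..k}. pos_le (pos j) (pos i)))"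

definition init_state :: "nat \<Rightarrow> pstate" where
  "init_state k = (0, (\<lambda>j. Some (2 ^ j)), (\<lambda>j. Some (2 ^ j)))"

definition peb_step :: "nat \<Rightarrow> pstate \<Rightarrow> pstate" where
  "peb_step k s = (case s of (c, pos, dest) \<Rightarrow>
     if c = 2 ^ k then s else
     (let c' = c + 1;
          pos1 = (\<lambda>j. if pos j \<noteq> dest j then map_option (\<lambda>p. p - 2) (pos j) else pos j)
      in if even c' then
           (let j = first_pebble k pos1;
                np = map_option (\<lambda>p. p + S_inc j) (pos1 j);
                nd = map_option (\<lambda>d. d + D_inc j) (dest j)
            in (case nd of
                  Some d \<Rightarrow> if d > 2 ^ k
                            then (c', pos1(j := None), dest(j := None))
                            else (c', pos1(j := np), dest(j := nd))
                | None \<Rightarrow> (c', pos1(j := np), dest(j := nd))))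
         else (c', pos1, dest)))"

definition run :: "nat \<Rightarrow> nat \<Rightarrow> pstate" where
  "run k t = (peb_step k ^^ t) (init_state k)"

text \<open>Pebble j has been discarded by time t (discarded pebbles stay at +infinity).\<close>
definition discarded :: "nat \<Rightarrow> nat \<Rightarrow> nat \<Rightarrow> bool" where
  "discarded k t j = (snd (snd (run k t)) j = None)"

end

theory Submission
imports Defs
begin

definition hit :: "nat \<Rightarrow> nat \<Rightarrow> bool" where
  "hit m j = ((2::nat)^(j+1) dvd m + 2^j)"

lemma hit_unique_lt:
  assumes "hit m j" "hit m j'" "j < j'" shows False
proof -
  have a: "(2::nat)^(j+1) dvd m + 2^j" using assms(1) by (simp add: hit_def)
  have b: "(2::nat)^(j'+1) dvd m + 2^j'" using assms(2) by (simp add: hit_def)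
  have d1: "(2::nat)^(j+1) dvd 2^(j'+1)" using assms(3) by (simp add: le_imp_power_dvd)
  have d2: "(2::nat)^(j+1) dvd 2^j'" by (rule le_imp_power_dvd) (use assms(3) in simp)
  from b d1 have "(2::nat)^(j+1) dvd m + 2^j'" using dvd_trans by blast
  with d2 have "(2::nat)^(j+1) dvd m" by (simp add: dvd_add_left_iff)
  with a have "(2::nat)^(j+1) dvd 2^j" by (simp add: dvd_add_right_iff)
  then have "(2::nat)^(j+1) \<le> 2^j" by (rule dvd_imp_le) simp
  then show False by simp
qed

lemma hit_unique: "hit m j \<Longrightarrow> hit m j' \<Longrightarrow> j = j'"
  using hit_unique_lt by (metis linorder_neqE_nat)

lemma hit_exists: "m > 0 \<Longrightarrow> \<exists>j. hit m j"
proof (induction m rule: less_induct)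
  case (less m)
  show ?case
  proof (cases "even m")
    case False
    then have "hit m 0" by (simp add: hit_def)
    then show ?thesis by blast
  next
    case True
    then obtain m' where m': "m = 2 * m'" by blast
    with less.prems have "m' > 0" "m' < m" by auto
    with less.IH obtain j where "hit m' j" by blast
    then have "2 * (2::nat)^(j+1) dvd 2 * (m' + 2^j)" unfolding hit_def by (rule mult_dvd_mono[OF dvd_refl])
    moreover have "2 * (2::nat)^(j+1) = 2^(j+1+1)" "2 * (m' + 2^j) = m + 2^(j+1)" using m' by auto
    ultimately have "hit m (j+1)" by (simp only: hit_def)
    then show ?thesis by blast
  qed
qed

lemma hit_bound: "m > 0 \<Longrightarrow> hit m j \<Longrightarrow> 2^j \<le> m"
proof -
  assume "m > 0" "hit m j"
  then have "(2::nat)^(j+1) \<le> m + 2^j" by (intro dvd_imp_le) (auto simp: hit_def)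
  then show ?thesis by simp
qed

lemma hit0: "hit m 0 \<longleftrightarrow> odd m"
  by (simp add: hit_def)

lemma r_hit: "Suc ((c + 2^j) mod 2^(j+1)) = 2^(j+1) \<longleftrightarrow> hit (Suc c) j"
proof -
  have "Suc (c + 2^j) mod 2^(j+1) = 0 \<longleftrightarrow> Suc ((c + 2^j) mod 2^(j+1)) = 2^(j+1)"
    by (simp add: mod_Suc)
  moreover have "Suc (c + 2^j) mod 2^(j+1) = 0 \<longleftrightarrow> hit (Suc c) j"
    by (simp add: hit_def dvd_eq_mod_eq_0)
  ultimately show ?thesis by simp
qed


definition dst :: "nat \<Rightarrow> nat \<Rightarrow> int" where
  "dst c j = (if j = 0 then 1 else int c + 2^(j+1) - int ((c + 2^j) mod 2^(j+1)))"

definition ps :: "nat \<Rightarrow> nat \<Rightarrow> int" where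
  "ps c j = (if j = 0 then 1 else max (dst c j) (3 * dst c j - 2 * int c - 3 * 2^j))"

lemma dst_gt: "j \<noteq> 0 \<Longrightarrow> dst c j > int c"
proof -
  assume "j \<noteq> 0"
  have "(c + 2^j) mod 2^(j+1) < (2::nat)^(j+1)" by simp
  then have "int ((c + 2^j) mod 2^(j+1)) < 2^(j+1)" by (metis of_nat_less_iff of_nat_numeral of_nat_power)
  then show ?thesis using \<open>j \<noteq> 0\<close> by (simp add: dst_def)
qed

lemma ps_ge: "ps c j \<ge> dst c j"
  by (simp add: ps_def dst_def)

lemma dst_nohit: "j \<noteq> 0 \<Longrightarrow> \<not> hit (Suc c) j \<Longrightarrow> dst (Suc c) j = dst c j"
proof -
  assume j: "j \<noteq> 0" and h: "\<not> hit (Suc c) j"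
  have "(Suc c + 2^j) mod 2^(j+1) = Suc ((c + 2^j) mod 2^(j+1))"
    using h r_hit[of c j] by (simp add: mod_Suc)
  then show ?thesis using j by (simp add: dst_def)
qed

lemma dst_hit: "j \<noteq> 0 \<Longrightarrow> hit (Suc c) j \<Longrightarrow> dst c j = int (Suc c) \<and> dst (Suc c) j = int (Suc c) + 2^(j+1)"
proof -
  assume j: "j \<noteq> 0" and h: "hit (Suc c) j"
  have r: "Suc ((c + 2^j) mod 2^(j+1)) = 2^(j+1)" using h r_hit by blast
  have "(Suc c + 2^j) mod 2^(j+1) = 0"
    using r by (simp add: mod_Suc)
  moreover have "int ((c + 2^j) mod 2^(j+1)) = 2^(j+1) - 1"
    using r by (metis add_diff_cancel_left' of_nat_Suc of_nat_numeral of_nat_power plus_1_eq_Suc)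
  ultimately show ?thesis using j by (simp add: dst_def)
qed

lemma ps_nohit: "j \<noteq> 0 \<Longrightarrow> \<not> hit (Suc c) j \<Longrightarrow>
   (if ps c j \<noteq> dst c j then ps c j - 2 else ps c j) = ps (Suc c) j"
proof -
  assume j: "j \<noteq> 0" and h: "\<not> hit (Suc c) j"
  have d: "dst (Suc c) j = dst c j" using dst_nohit[OF j h] .
  obtain P :: int where P: "2^j = 2 * P" using j
    by (metis gr0_implies_Suc neq0_conv power_Suc)
  show ?thesis using j d P unfolding ps_def by (simp add: max_def) presburger
qed

lemma ps_hit: "j \<noteq> 0 \<Longrightarrow> hit (Suc c) j \<Longrightarrow>
   ps c j = dst c j \<and> ps c j = int (Suc c) \<and> ps (Suc c) j = int (Suc c) + 3 * 2^j"
proof -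
  assume j: "j \<noteq> 0" and h: "hit (Suc c) j"
  have d: "dst c j = int (Suc c)" "dst (Suc c) j = int (Suc c) + 2 * 2^j" using dst_hit[OF j h] by auto
  have P: "(2::int)^j \<ge> 2" using j by (metis One_nat_def Suc_leI neq0_conv power_increasing power_one_right one_le_numeral)
  show ?thesis using j d P unfolding ps_def by (simp add: max_def)
qed


definition st :: "nat \<Rightarrow> pstate" where
  "st c = (c, \<lambda>j. Some (ps c j), \<lambda>j. Some (dst c j))"

lemma pos1_gen: "(\<lambda>j. if Some (ps c j) \<noteq> Some (dst c j) then map_option (\<lambda>p. p - 2) (Some (ps c j)) else Some (ps c j))
   = (\<lambda>j. Some (if hit (Suc c) j \<and> j \<noteq> 0 then int (Suc c) else ps (Suc c) j))"
proof
  fix j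
  show "(if Some (ps c j) \<noteq> Some (dst c j) then map_option (\<lambda>p. p - 2) (Some (ps c j)) else Some (ps c j))
     = Some (if hit (Suc c) j \<and> j \<noteq> 0 then int (Suc c) else ps (Suc c) j)"
  proof (cases "j = 0")
    case True then show ?thesis by (simp add: ps_def dst_def)
  next
    case False
    show ?thesis
    proof (cases "hit (Suc c) j")
      case True then show ?thesis using ps_hit[OF False True] False by simp
    next
      case h: False then show ?thesis using ps_nohit[OF False h] False
        by (auto split: if_splits)
    qed
  qed
qed

lemma step_odd: assumes "c < 2^k" "odd (Suc c)" shows "peb_step k (st c) = st (Suc c)"
proof -
  have nh: "\<And>j. hit (Suc c) j \<Longrightarrow> j = 0" using hit0 hit_unique assms(2) by blast
  have dd: "(\<lambda>j. Some (dst c j)) = (\<lambda>j. Some (dst (Suc c) j))"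
  proof
    fix j show "Some (dst c j) = Some (dst (Suc c) j)"
    proof (cases "j = 0")
      case True then show ?thesis by (simp add: dst_def)
    next
      case False
      then have "\<not> hit (Suc c) j" using nh by blast
      then show ?thesis using dst_nohit[OF False] by simp
    qed
  qed
  have pp: "(\<lambda>j. Some (if hit (Suc c) j \<and> j \<noteq> 0 then int (Suc c) else ps (Suc c) j)) = (\<lambda>j. Some (ps (Suc c) j))"
    using nh by fastforce
  show ?thesis using assms unfolding peb_step_def st_def
    by (simp only: prod.case pos1_gen pp Let_def) (simp add: dd)
qed


lemma dst_eq_hit: "j \<noteq> 0 \<Longrightarrow> dst c j = int (Suc c) \<Longrightarrow> hit (Suc c) j"
proof -
  assume j: "j \<noteq> 0" and e: "dst c j = int (Suc c)"
  then have "int ((c + 2^j) mod 2^(j+1)) + 1 = 2^(j+1)" by (simp add: dst_def)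
  then have "int (Suc ((c + 2^j) mod 2^(j+1))) = int (2^(j+1))" by simp
  then have "Suc ((c + 2^j) mod 2^(j+1)) = 2^(j+1)" by (simp only: of_nat_eq_iff)
  then show ?thesis using r_hit by blast
qed

lemma ps_gt: "j \<noteq> 0 \<Longrightarrow> \<not> hit (Suc c) j \<Longrightarrow> ps (Suc c) j > int (Suc c)"
proof -
  assume j: "j \<noteq> 0" and h: "\<not> hit (Suc c) j"
  have "dst c j > int c" using dst_gt[OF j] .
  moreover have "dst c j \<noteq> int (Suc c)" using dst_eq_hit[OF j] h by blast
  moreover have "dst (Suc c) j = dst c j" using dst_nohit[OF j h] .
  moreover have "ps (Suc c) j \<ge> dst (Suc c) j" by (rule ps_ge)
  ultimately show ?thesis by linarith
qed

lemma step_even: assumes "c < 2^k" "even (Suc c)" "hit (Suc c) j0" "j0 \<le> k"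
  shows "peb_step k (st c) = (if dst c j0 + D_inc j0 > 2^k
      then (Suc c, (\<lambda>j. Some (ps (Suc c) j))(j0 := None), (\<lambda>j. Some (dst (Suc c) j))(j0 := None))
      else st (Suc c))"
proof -
  have j0: "j0 \<noteq> 0" using assms(2,3) hit0[of "Suc c"] by (metis)
  have uh: "\<And>j. hit (Suc c) j \<longleftrightarrow> j = j0" using hit_unique[of "Suc c" _ j0] assms(3) by (metis)
  define Q where "Q = (\<lambda>j. Some (if hit (Suc c) j \<and> j \<noteq> 0 then int (Suc c) else ps (Suc c) j))"
  have Qj0: "Q j0 = Some (int (Suc c))" using j0 assms(3) by (simp add: Q_def)
  have Qi: "\<And>i. i \<noteq> 0 \<Longrightarrow> i \<noteq> j0 \<Longrightarrow> \<exists>p. Q i = Some p \<and> p > int (Suc c)"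
  proof -
    fix i assume i: "i \<noteq> 0" "i \<noteq> j0"
    then have h: "\<not> hit (Suc c) i" using uh by blast
    show "\<exists>p. Q i = Some p \<and> p > int (Suc c)" using ps_gt[OF i(1) h] h by (simp add: Q_def)
  qed
  have j0k: "j0 \<in> {1..k}" using j0 assms(4) by simp
  have fp: "first_pebble k Q = j0"
    unfolding first_pebble_def
  proof (rule Least_equality)
    have "\<forall>i\<in>{1..k}. pos_le (Q j0) (Q i)"
    proof
      fix i assume i: "i \<in> {1..k}"
      show "pos_le (Q j0) (Q i)"
      proof (cases "i = j0")
        case True then show ?thesis using Qj0 by (simp add: pos_le_def)
      next
        case False
        have i0: "i \<noteq> 0" using i by simp
        obtain p where "Q i = Some p" "p > int (Suc c)" using Qi[OF i0 False] by blast
        then show ?thesis using Qj0 by (simp add: pos_le_def)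
      qed
    qed
    then show "j0 \<in> {1..k} \<and> (\<forall>i\<in>{1..k}. pos_le (Q j0) (Q i))" using j0k by blast
  next
    fix y assume y: "y \<in> {1..k} \<and> (\<forall>i\<in>{1..k}. pos_le (Q y) (Q i))"
    show "j0 \<le> y"
    proof (rule ccontr)
      assume "\<not> j0 \<le> y"
      then have yj: "y \<noteq> j0" by simp
      have y0: "y \<noteq> 0" using y by simp
      obtain p where p: "Q y = Some p" "p > int (Suc c)" using Qi[OF y0 yj] by blast
      have "pos_le (Q y) (Q j0)" using y j0k by blast
      then show False using Qj0 p by (simp add: pos_le_def)
    qed
  qed
  have QP: "Q(j0 := Some (int (Suc c) + S_inc j0)) = (\<lambda>j. Some (ps (Suc c) j))"
  proof
    fix j show "(Q(j0 := Some (int (Suc c) + S_inc j0))) j = Some (ps (Suc c) j)"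
    proof (cases "j = j0")
      case True then show ?thesis using ps_hit[OF j0 assms(3)] by (simp add: S_inc_def)
    next
      case False
      then have h: "\<not> hit (Suc c) j" using uh by blast
      then show ?thesis using False by (simp add: Q_def)
    qed
  qed
  have QN: "Q(j0 := None) = (\<lambda>j. Some (ps (Suc c) j))(j0 := None)"
  proof
    fix j show "(Q(j0 := None)) j = ((\<lambda>j. Some (ps (Suc c) j))(j0 := None)) j"
    proof (cases "j = j0")
      case False
      then have h: "\<not> hit (Suc c) j" using uh by blast
      then show ?thesis using False by (simp add: Q_def)
    qed simp
  qed
  have DD: "(\<lambda>j. Some (dst c j))(j0 := Some (dst c j0 + D_inc j0)) = (\<lambda>j. Some (dst (Suc c) j))"
  proof
    fix j show "((\<lambda>j. Some (dst c j))(j0 := Some (dst c j0 + D_inc j0))) j = Some (dst (Suc c) j)"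
    proof (cases "j = j0")
      case True then show ?thesis using dst_hit[OF j0 assms(3)] by (simp add: D_inc_def)
    next
      case False
      show ?thesis
      proof (cases "j = 0")
        case True then show ?thesis using False by (simp add: dst_def)
      next
        case j: False
        have "\<not> hit (Suc c) j" using uh False by blast
        then show ?thesis using dst_nohit[OF j] False by simp
      qed
    qed
  qed
  have DN: "(\<lambda>j. Some (dst c j))(j0 := None) = (\<lambda>j. Some (dst (Suc c) j))(j0 := None)"
    using arg_cong[OF DD, of "\<lambda>f. f(j0 := None)"] by simp
  have dc: "dst c j0 = int (Suc c)" using dst_hit[OF j0 assms(3)] by simp
  have pc: "ps c j0 = int (Suc c)" using ps_hit[OF j0 assms(3)] by simp
  show ?thesis using assms(1,2)
    unfolding peb_step_def st_def
    apply (simp only: prod.case pos1_gen Let_def flip: Q_def)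
    apply (simp only: fp Qj0 option.map pc)
    using QP QN DD DN dc by (simp del: fun_upd_apply)
qed


lemma st0: "run k 0 = st 0"
proof -
  have d: "dst 0 j = 2^j" for j
  proof (cases "j = 0")
    case False
    have "(2::nat)^j mod 2^(j+1) = 2^j" by simp
    then show ?thesis using False by (simp add: dst_def)
  qed (simp add: dst_def)
  have p: "ps 0 j = 2^j" for j using d[of j] by (simp add: ps_def)
  show ?thesis by (simp add: run_def init_state_def st_def d p)
qed

lemma run_Suc: "run k (Suc c) = peb_step k (run k c)"
  by (simp add: run_def)

lemma run_st: assumes "2 \<le> k" shows "c < 2^(k-1) \<Longrightarrow> run k c = st c"
proof (induction c)
  case 0 then show ?case using st0 by simp
next
  case (Suc c)
  have ck: "c < 2^k" using Suc.prems
    by (metis Suc_lessD diff_le_self less_le_trans one_le_numeral power_increasing)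
  have IH: "run k c = st c" using Suc by simp
  show ?case
  proof (cases "even (Suc c)")
    case False
    then show ?thesis using step_odd[OF ck False] IH run_Suc by simp
  next
    case True
    obtain j0 where h: "hit (Suc c) j0" using hit_exists by blast
    have j0: "j0 \<noteq> 0" using h True hit0[of "Suc c"] by metis
    have b: "2^j0 \<le> Suc c" using hit_bound h by blast
    then have "(2::nat)^j0 < 2^(k-1)" using Suc.prems by linarith
    then have jl: "j0 < k - 1" using power_less_imp_less_exp by (metis one_less_numeral_iff semiring_norm(76))
    then have j0k: "j0 \<le> k" by simp
    have "(2::nat)^(j0+1) \<le> 2^(k-1)" by (rule power_increasing) (use jl in auto)
    moreover have "(2::nat)^(k-1) + 2^(k-1) = 2^k" using assms
      by (cases k) auto
    ultimately have nat_le: "Suc c + 2^(j0+1) \<le> 2^k" using Suc.prems by linarith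
    have "dst c j0 + D_inc j0 = int (Suc c + 2^(j0+1))"
      using dst_hit[OF j0 h] by (simp add: D_inc_def)
    moreover have "int (Suc c + 2^(j0+1)) \<le> 2^k" using nat_le
      by (metis of_nat_le_iff of_nat_numeral of_nat_power)
    ultimately have nd: "\<not> dst c j0 + D_inc j0 > 2^k" by simp
    show ?thesis using step_even[OF ck True h j0k] nd IH run_Suc by simp
  qed
qed


lemma run_final: assumes "2 \<le> k"
  shows "run k (2^(k-1)) = (2^(k-1), (\<lambda>j. Some (ps (2^(k-1)) j))(k-1 := None),
            (\<lambda>j. Some (dst (2^(k-1)) j))(k-1 := None))"
proof -
  define c where "c = 2^(k-1) - (1::nat)"
  have pos: "(0::nat) < 2^(k-1)" by simp
  have sc: "Suc c = 2^(k-1)" using pos unfolding c_def by linarith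
  have kk: "(2::nat)^(k-1) + 2^(k-1) = 2^k" using assms by (cases k) auto
  have ck: "c < 2^k" using sc kk by linarith
  have ev: "even (Suc c)" using sc assms by (cases k) auto
  have k1: "k - 1 + 1 = k" using assms by simp
  have h: "hit (Suc c) (k-1)" unfolding hit_def sc k1 kk by simp
  have j0k: "k - 1 \<le> k" by simp
  have j0: "k - 1 \<noteq> 0" using assms by simp
  have IH: "run k c = st c" using run_st[OF assms] sc by simp
  have "dst c (k-1) + D_inc (k-1) = int (2^(k-1) + 2^k)"
    using dst_hit[OF j0 h] sc assms by (simp add: D_inc_def)
  moreover have "(2::nat)^k < 2^(k-1) + 2^k" by simp
  then have "(2::int)^k < int (2^(k-1) + 2^k)"
    by (metis of_nat_less_iff of_nat_numeral of_nat_power)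
  ultimately have dd: "dst c (k-1) + D_inc (k-1) > 2^k" by simp
  have "run k (Suc c) = peb_step k (st c)" using IH run_Suc by simp
  also have "\<dots> = (Suc c, (\<lambda>j. Some (ps (Suc c) j))(k-1 := None), (\<lambda>j. Some (dst (Suc c) j))(k-1 := None))"
    using step_even[OF ck ev h j0k] dd by simp
  finally show ?thesis unfolding sc .
qed

theorem fact5:
  fixes k :: nat
  assumes "k \<ge> 2"
  shows "\<forall>j\<in>{1..k}. (\<exists>t\<le>2 ^ k div 2. discarded k t j) \<longleftrightarrow> j = k - 1"
proof
  fix j assume j: "j \<in> {1..k}"
  have hk: "(2::nat) ^ k div 2 = 2^(k-1)" using assms by (cases k) auto
  show "(\<exists>t\<le>2 ^ k div 2. discarded k t j) \<longleftrightarrow> j = k - 1"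
  proof
    assume "\<exists>t\<le>2 ^ k div 2. discarded k t j"
    then obtain t where t: "t \<le> 2^(k-1)" "discarded k t j" using hk by auto
    show "j = k - 1"
    proof (cases "t < 2^(k-1)")
      case True
      then have "run k t = st t" using run_st[OF assms] by simp
      then show ?thesis using t(2) by (simp add: discarded_def st_def)
    next
      case False
      then have "t = 2^(k-1)" using t(1) by simp
      then show ?thesis using t(2) run_final[OF assms] by (simp add: discarded_def split: if_splits)
    qed
  next
    assume "j = k - 1"
    then have "discarded k (2^(k-1)) j" using run_final[OF assms] by (simp add: discarded_def)
    then show "\<exists>t\<le>2 ^ k div 2. discarded k t j" using hk by auto
  qed
qed

end
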